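(* Let $n\ge1$ and let $q$ be an integer coprime to $n$. (a) The linking form $(q/n)$ on $\mathbb Z_n$ is simple if and only if $q$ is congruent modulo $n$ to plus or minus a quadratic residue mod $n$ (i.e. $q\equiv\pm k^2 \pmod n$ for some integer $k$). (b) The linking form $(q/n)$ on $\mathbb Z_n$ is semisimple if and only if there is a factorization $n=n_1\cdots n_k$ with the $n_i$ pairwise relatively prime such that each form $(q_i/n_i)$ is simple, where $q_i=qn/n_i$.
   Context: For $n\ge1$ and $q$ coprime to $n$, $(q/n)$ denotes the nondegenerate symmetric linking form on $\mathbb Z_n$ with values in $\mathbb Q/\mathbb Z$ whose value on a generator paired with itself is $q/n$; $(q/n)\cong(q'/n)$ iff $q'\equiv k^2q \pmod n$ for some $k$ coprime to $n$. A linking form is simple if it is isomorphic to $(\pm1/m)$ for some $m\ge1$ (including the trivial form on $\mathbb Z_1=0$), and semisimple if it is isomorphic to an orthogonal direct sum of simple forms. *)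

theory Defs
  imports Complex_Main "HOL-Number_Theory.Cong"
begin

text \<open>A (finite) linking form is represented concretely as a triple
  (carrier, group addition, bilinear form), with form values in rat read modulo the integers
  (i.e. as values in Q/Z).\<close>

type_synonym ('a) lform = "'a set \<times> ('a \<Rightarrow> 'a \<Rightarrow> 'a) \<times> ('a \<Rightarrow> 'a \<Rightarrow> rat)"

definition lf_iso :: "'a lform \<Rightarrow> 'b lform \<Rightarrow> bool" where
  "lf_iso F G \<longleftrightarrow>
     (case F of (A, addA, bA) \<Rightarrow> case G of (B, addB, bB) \<Rightarrow>
       (\<exists>f. bij_betw f A B
          \<and> (\<forall>x\<in>A. \<forall>y\<in>A. f (addA x y) = addB (f x) (f y))
          \<and> (\<forall>x\<in>A. \<forall>y\<in>A. bA x y - bB (f x) (f y) \<in> \<int>)))"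

definition cyc_form :: "int \<Rightarrow> nat \<Rightarrow> int lform" where
  "cyc_form q n = ({0..<int n}, (\<lambda>x y. (x + y) mod int n),
                   (\<lambda>x y. of_int (q * x * y) / of_nat n))"

definition osum :: "(int \<times> nat) list \<Rightarrow> int list lform" where
  "osum L = ({xs. length xs = length L \<and> (\<forall>i<length L. 0 \<le> xs!i \<and> xs!i < int (snd (L!i)))},
             (\<lambda>xs ys. map (\<lambda>i. (xs!i + ys!i) mod int (snd (L!i))) [0..<length L]),
             (\<lambda>xs ys. \<Sum>i<length L. of_int (fst (L!i) * xs!i * ys!i) / of_nat (snd (L!i))))"

definition simple_lf :: "'a lform \<Rightarrow> bool" where
  "simple_lf F \<longleftrightarrow> (\<exists>m::nat. m \<ge> 1 \<and> (\<exists>e::int. e \<in> {1, -1} \<and> lf_iso F (cyc_form e m)))"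

definition semisimple_lf :: "'a lform \<Rightarrow> bool" where
  "semisimple_lf F \<longleftrightarrow>
     (\<exists>L::(int \<times> nat) list. (\<forall>(e, m)\<in>set L. e \<in> {1, -1} \<and> m \<ge> 1) \<and> lf_iso F (osum L))"

end

theory Submission
  imports Defs "HOL-Number_Theory.Number_Theory"
begin


lemma frac_int:
  assumes "(m::nat) > 0" "[a = b] (mod int m)"
  shows "(of_int a / of_nat m - of_int b / of_nat m :: rat) \<in> \<int>"
proof -
  obtain t where t: "a - b = int m * t" using assms(2) by (auto simp: cong_iff_dvd_diff dvd_def)
  have "(of_int a / of_nat m - of_int b / of_nat m :: rat) = of_int (a - b) / of_nat m"
    by (simp add: diff_divide_distrib)
  also have "\<dots> = of_int t" using assms(1) by (simp add: t)
  finally show ?thesis by simp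
qed

lemma frac_int_rev:
  assumes "(m::nat) > 0" "(of_int a / of_nat m - of_int b / of_nat m :: rat) \<in> \<int>"
  shows "[a = b] (mod int m)"
proof -
  obtain t where t: "(of_int a / of_nat m - of_int b / of_nat m :: rat) = of_int t"
    using assms(2) Ints_cases by blast
  hence "(of_int (a - b) :: rat) = of_int (int m * t)" using assms(1)
    by (simp add: diff_divide_distrib[symmetric] field_simps)
  hence "a - b = int m * t" by (simp only: of_int_eq_iff)
  thus ?thesis by (simp add: cong_iff_dvd_diff)
qed

lemma simple_cyc_fwd:
  assumes "n \<ge> 1" "simple_lf (cyc_form q n)"
  shows "\<exists>e k. e \<in> {1,-1} \<and> [q = e*k^2] (mod int n)"
proof -
  obtain m e f where m: "m \<ge> 1" and e: "e \<in> {1,-1::int}"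
    and bij: "bij_betw f {0..<int n} {0..<int m}"
    and frm: "\<forall>x\<in>{0..<int n}. \<forall>y\<in>{0..<int n}.
        (of_int (q*x*y) / of_nat n - of_int (e * f x * f y) / of_nat m :: rat) \<in> \<int>"
    using assms(2) unfolding simple_lf_def lf_iso_def cyc_form_def by auto
  have "m = n" using bij_betw_same_card[OF bij] by simp
  show ?thesis
  proof (cases "n = 1")
    case True
    then show ?thesis using e by (auto simp: cong_def)
  next
    case False
    hence "1 \<in> {0..<int n}" using assms(1) by auto
    from frm[rule_format, OF this this] \<open>m = n\<close>
    have "[q*1*1 = e * f 1 * f 1] (mod int n)"
      using assms(1) by (intro frac_int_rev) auto
    hence "[q = e * (f 1)^2] (mod int n)" by (simp add: power2_eq_square mult.assoc)
    then show ?thesis using e by blast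
  qed
qed

lemma cyc_iso:
  assumes n: "n \<ge> 1" and k: "coprime k (int n)" and c: "[q = e*k^2] (mod int n)"
  shows "lf_iso (cyc_form q n) (cyc_form e n)"
proof -
  define f where "f x = (k * x) mod int n" for x
  let ?A = "{0..<int n}"
  have inj: "inj_on f ?A"
  proof
    fix x y assume xy: "x \<in> ?A" "y \<in> ?A" "f x = f y"
    hence "[k*x = k*y] (mod int n)" by (simp add: f_def cong_def)
    hence "[x = y] (mod int n)" using cong_mult_lcancel[OF k] by simp
    thus "x = y" using xy by (simp add: cong_def)
  qed
  have sub: "f ` ?A \<subseteq> ?A" using n by (auto simp: f_def)
  have "card (f ` ?A) = card ?A" using card_image[OF inj] .
  hence "f ` ?A = ?A" using sub by (intro card_subset_eq) auto
  hence bij: "bij_betw f ?A ?A" using inj by (simp add: bij_betw_def)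
  have hom: "\<forall>x\<in>?A. \<forall>y\<in>?A. f ((x+y) mod int n) = (f x + f y) mod int n"
    by (auto simp: f_def mod_add_eq mod_mult_right_eq distrib_left)
  have frm: "\<forall>x\<in>?A. \<forall>y\<in>?A. (of_int (q*x*y) / of_nat n - of_int (e * f x * f y) / of_nat n :: rat) \<in> \<int>"
  proof (intro ballI frac_int)
    fix x y
    have "[e * f x * f y = e * (k*x) * (k*y)] (mod int n)"
      unfolding f_def by (intro cong_mult cong_refl) (auto simp: cong_def)
    moreover have "[q*x*y = (e*k^2)*x*y] (mod int n)" by (intro cong_mult c cong_refl)
    ultimately show "[q*x*y = e * f x * f y] (mod int n)"
      by (metis (no_types, lifting) cong_sym cong_trans mult.commute mult.left_commute power2_eq_square)
  qed (use n in auto)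
  show ?thesis unfolding lf_iso_def cyc_form_def using bij hom frm by auto
qed

lemma simple_cyc_bwd:
  assumes n: "n \<ge> 1" and q: "coprime q (int n)" and e: "e \<in> {1,-1}" and c: "[q = e*k^2] (mod int n)"
  shows "simple_lf (cyc_form q n)"
proof -
  have "coprime (e*k^2) (int n)" using cong_imp_coprime[OF c q] .
  hence "coprime k (int n)" by simp
  thus ?thesis unfolding simple_lf_def using cyc_iso[OF n _ c] n e by blast
qed



definition car :: "(int \<times> nat) list \<Rightarrow> int list set" where
  "car L = {xs. length xs = length L \<and> (\<forall>i<length L. 0 \<le> xs!i \<and> xs!i < int (snd (L!i)))}"

lemma car_Cons: "car (a # L) = (\<lambda>(x,xs). x # xs) ` ({0..<int (snd a)} \<times> car L)"
proof (intro equalityI subsetI)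
  fix xs assume "xs \<in> car (a # L)"
  then obtain y ys where xs: "xs = y # ys" unfolding car_def by (cases xs) auto
  with \<open>xs \<in> car (a # L)\<close> have "y \<in> {0..<int (snd a)}" "ys \<in> car L"
    unfolding car_def by (force, fastforce)
  thus "xs \<in> (\<lambda>(x,xs). x # xs) ` ({0..<int (snd a)} \<times> car L)" using xs by force
next
  fix xs assume "xs \<in> (\<lambda>(x,xs). x # xs) ` ({0..<int (snd a)} \<times> car L)"
  then obtain y ys where "xs = y # ys" "y \<in> {0..<int (snd a)}" "ys \<in> car L" by auto
  thus "xs \<in> car (a # L)" unfolding car_def by (auto simp: nth_Cons split: nat.split)
qed

lemma card_car: "card (car L) = prod_list (map snd L)"
proof (induction L)
  case Nil
  have "car [] = {[]}" by (auto simp: car_def)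
  then show ?case by simp
next
  case (Cons a L)
  have "inj_on (\<lambda>(x,xs). x # xs) ({0..<int (snd a)} \<times> car L)" by (auto simp: inj_on_def)
  hence "card (car (a # L)) = card ({0..<int (snd a)} \<times> car L)"
    unfolding car_Cons by (rule card_image)
  also have "\<dots> = snd a * card (car L)" by (simp add: card_cartesian_product)
  finally show ?case using Cons by simp
qed

lemma osum_car: "fst (osum L) = car L" by (simp add: osum_def car_def)

lemma prod_dvd_pairwise:
  fixes f :: "nat \<Rightarrow> int"
  assumes "finite I" "\<forall>i\<in>I. \<forall>j\<in>I. i \<noteq> j \<longrightarrow> coprime (f i) (f j)" "\<forall>i\<in>I. f i dvd D"
  shows "prod f I dvd D"
  using assms
proof (induction I rule: finite_induct)
  case empty then show ?case by simp
next
  case (insert x F)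
  have "coprime (f x) (prod f F)"
    using insert.prems(1) insert.hyps(2) by (intro prod_coprime_right) auto
  moreover have "prod f F dvd D" using insert by auto
  ultimately show ?case using insert by (simp add: divides_mult)
qed

lemma prodlist_int: "int (prod_list ns) = (\<Prod>i\<in>{0..<length ns}. int (ns!i))"
  by (simp add: prod.list_conv_set_nth)

lemma prodlist_dvd:
  fixes ns :: "nat list"
  assumes "\<forall>i<length ns. \<forall>j<length ns. i \<noteq> j \<longrightarrow> coprime (ns!i) (ns!j)"
    "\<forall>i<length ns. int (ns!i) dvd D"
  shows "int (prod_list ns) dvd D"
  unfolding prodlist_int using assms by (intro prod_dvd_pairwise) auto

lemma prodlist_div_coprime:
  fixes ns :: "nat list"
  assumes "\<forall>i<length ns. \<forall>j<length ns. i \<noteq> j \<longrightarrow> coprime (ns!i) (ns!j)"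
    "i < length ns" "ns!i > 0"
  shows "coprime (prod_list ns div ns!i) (ns!i)"
proof -
  define P where "P = (\<Prod>j\<in>{0..<length ns}-{i}. ns!j)"
  have eq: "prod_list ns = ns!i * P"
    using assms(2) unfolding P_def by (simp add: prod.list_conv_set_nth prod.remove)
  have "prod_list ns div ns!i = (\<Prod>j\<in>{0..<length ns}-{i}. ns!j)"
    unfolding eq using assms(3) by (simp only: div_mult_self1_is_m P_def)
  moreover have "coprime (\<Prod>j\<in>{0..<length ns}-{i}. ns!j) (ns!i)"
    using assms(1,2) by (intro prod_coprime_left) auto
  ultimately show ?thesis by simp
qed

lemma dvd_prodlist: "i < length (ns::nat list) \<Longrightarrow> ns!i dvd prod_list ns"
  using nth_mem prod_list_dvd by blast

lemma sum_cong_single: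
  fixes t :: "nat \<Rightarrow> int"
  assumes "i < N" "\<forall>j<N. j \<noteq> i \<longrightarrow> m dvd t j"
  shows "[(\<Sum>j<N. t j) = t i] (mod m)"
proof -
  have "(\<Sum>j<N. t j) = t i + (\<Sum>j\<in>{..<N}-{i}. t j)" using assms(1) by (simp add: sum.remove)
  moreover have "m dvd (\<Sum>j\<in>{..<N}-{i}. t j)" using assms(2) by (intro dvd_sum) auto
  ultimately show ?thesis by (simp add: cong_iff_dvd_diff)
qed



lemma zero_of_double: "0 \<le> (a::int) \<Longrightarrow> a < m \<Longrightarrow> a = (a + a) mod m \<Longrightarrow> a = 0"
  by (smt (verit, ccfv_threshold) bits_mod_div_trivial mod_div_mult_eq
    mod_eq_self_iff_div_eq_0 nonzero_mult_div_cancel_right)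

lemma frac_scale:
  assumes "(m::nat) > 0" "m dvd n" "n > 0"
  shows "(of_int a / of_nat m :: rat) = of_int (a * int (n div m)) / of_nat n"
proof -
  obtain d where d: "n = m * d" using assms(2) by auto
  hence "d > 0" using assms by auto
  thus ?thesis using assms(1) by (simp add: d)
qed

lemma semi_fwd:
  assumes n: "n \<ge> 1" and q: "coprime q (int n)"
    and L: "\<forall>(e,m)\<in>set L. e \<in> {1,-1} \<and> m \<ge> 1" and iso: "lf_iso (cyc_form q n) (osum L)"
  shows "prod_list (map snd L) = n
     \<and> (\<forall>i<length L. \<forall>j<length L. i \<noteq> j \<longrightarrow> coprime (map snd L!i) (map snd L!j))
     \<and> (\<forall>i<length L. simple_lf (cyc_form (q * int (n div (map snd L)!i)) ((map snd L)!i)))"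
proof -
  define N where "N = length L"
  define m where "m j = snd (L!j)" for j
  define e where "e j = fst (L!j)" for j
  let ?A = "{0..<int n}"
  obtain f where bij0: "bij_betw f ?A (fst (osum L))"
    and hom: "\<forall>x\<in>?A. \<forall>y\<in>?A. f ((x+y) mod int n) = map (\<lambda>i. (f x!i + f y!i) mod int (m i)) [0..<N]"
    and frm: "\<forall>x\<in>?A. \<forall>y\<in>?A. (of_int (q*x*y) / of_nat n
        - (\<Sum>i<N. of_int (e i * f x!i * f y!i) / of_nat (m i)) :: rat) \<in> \<int>"
    using iso unfolding lf_iso_def cyc_form_def m_def e_def N_def by (auto simp: osum_def)
  have bij: "bij_betw f ?A (car L)" using bij0 by (simp add: osum_car)
  have mpos: "m j \<ge> 1" if "j < N" for j
    using L that nth_mem[of j L] unfolding m_def N_def by (cases "L!j") fastforce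
  have epm: "e j \<in> {1,-1}" if "j < N" for j
    using L that nth_mem[of j L] unfolding e_def N_def by (cases "L!j") fastforce
  have fB: "f x \<in> car L" if "x \<in> ?A" for x using bij that by (meson bij_betwE)
  have flen: "length (f x) = N" and frange: "\<And>j. j < N \<Longrightarrow> 0 \<le> f x!j \<and> f x!j < int (m j)"
    if "x \<in> ?A" for x using fB[OF that] by (auto simp: car_def N_def m_def)
  have prodn: "prod_list (map snd L) = n"
    using bij_betw_same_card[OF bij] card_car[of L] by simp
  have ms: "map snd L ! j = m j" if "j < N" for j using that by (simp add: m_def N_def)
  have mdvd: "m j dvd n" if "j < N" for j
    using dvd_prodlist[of j "map snd L"] that prodn ms[OF that] by (simp add: N_def)
  have A0: "0 \<in> ?A" using n by simp
  have f0: "f 0 ! j = 0" if "j < N" for j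
  proof -
    have "f 0 = map (\<lambda>i. (f 0!i + f 0!i) mod int (m i)) [0..<N]" using hom A0 by force
    hence "f 0 ! j = map (\<lambda>i. (f 0!i + f 0!i) mod int (m i)) [0..<N] ! j" by (rule arg_cong)
    also have "\<dots> = (f 0!j + f 0!j) mod int (m j)" using that by (simp del: upt_Suc)
    finally have "f 0 ! j = (f 0!j + f 0!j) mod int (m j)" .
    thus ?thesis using zero_of_double frange[OF A0 that] by blast
  qed
  define g where "g j = f (1 mod int n) ! j" for j
  have form: "f (int k) ! j = (int k * g j) mod int (m j)" if "k < n" "j < N" for k j
    using that
  proof (induction k)
    case 0 then show ?case using f0 by simp
  next
    case (Suc k)
    hence n2: "n \<ge> 2" by simp
    hence one: "1 mod int n = 1" by simp
    have kA: "int k \<in> ?A" and oA: "1 \<in> ?A" using Suc.prems n2 by auto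
    have "(int k + 1) mod int n = int k + 1" using Suc.prems by simp
    hence "f (int (Suc k)) = map (\<lambda>i. (f (int k)!i + f 1!i) mod int (m i)) [0..<N]"
      using hom kA oA by (metis of_nat_Suc add.commute)
    hence "f (int (Suc k)) ! j = (f (int k)!j + f 1!j) mod int (m j)" using Suc.prems by simp
    also have "\<dots> = ((int k * g j) mod int (m j) + g j) mod int (m j)"
      using Suc by (simp add: g_def one)
    also have "\<dots> = (int k * g j + g j) mod int (m j)"
      by (rule mod_add_left_eq)
    also have "int k * g j + g j = int (Suc k) * g j" by (simp add: distrib_right)
    finally show ?case .
  qed
  define u where "u i = map (\<lambda>j. if j = i then 1 mod int (m j) else 0) [0..<N]" for i
  have xi: "\<exists>x\<in>?A. \<forall>j<N. (x * g j) mod int (m j) = (if j = i then 1 mod int (m j) else 0)"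
    if "i < N" for i
  proof -
    have mp: "\<And>j. j < length L \<Longrightarrow> 0 < int (snd (L!j))" using mpos unfolding N_def m_def by fastforce
    have "u i \<in> car L" using mp unfolding u_def car_def N_def m_def by (auto simp: pos_mod_sign pos_mod_bound)
    then obtain x where x: "x \<in> ?A" "f x = u i" using bij by (metis bij_betw_iff_bijections)
    have "f x ! j = (x * g j) mod int (m j)" if "j < N" for j
      using form[of "nat x" j] x that by auto
    moreover have "f x ! j = (if j = i then 1 mod int (m j) else 0)" if "j < N" for j
      using x(2) that by (simp add: u_def)
    ultimately show ?thesis using x(1) by (intro bexI[of _ x]) auto
  qed
  have cong1: "\<exists>x. [x * g i = 1] (mod int (m i)) \<and> (\<forall>j<N. j \<noteq> i \<longrightarrow> int (m j) dvd x * g j)"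
    if iN: "i < N" for i
  proof -
    obtain x where x: "\<forall>j<N. (x * g j) mod int (m j) = (if j = i then 1 mod int (m j) else 0)"
      using xi[OF iN] by blast
    have "[x * g i = 1] (mod int (m i))" using x iN by (auto simp: cong_def)
    moreover have "\<forall>j<N. j \<noteq> i \<longrightarrow> int (m j) dvd x * g j" using x by (auto simp: dvd_eq_mod_eq_0)
    ultimately show ?thesis by blast
  qed
  have copg: "coprime (g j) (int (m j))" if "j < N" for j
    using cong1[OF that] coprime_iff_invertible_int by (metis mult.commute)
  have pw: "coprime (m i) (m j)" if ij: "i < N" "j < N" "i \<noteq> j" for i j
  proof -
    obtain x where x1: "[x * g i = 1] (mod int (m i))" and x2: "int (m j) dvd x * g j"
      using cong1[OF ij(1)] ij by blast
    have x3: "int (m j) dvd x" using x2 copg[OF ij(2)]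
      by (metis coprime_commute coprime_dvd_mult_left_iff)
    have "coprime (int (m i)) (int (m j))"
    proof (rule coprimeI)
      fix c assume c: "c dvd int (m i)" "c dvd int (m j)"
      have "c dvd x * g i - 1" using x1 c(1) by (meson cong_iff_dvd_diff cong_sym dvd_trans cong_dvd_modulus)
      moreover have "c dvd x * g i" using c(2) x3 by (meson dvd_mult2 dvd_trans)
      ultimately have "c dvd x * g i - (x * g i - 1)" using dvd_diff by blast
      hence "c dvd 1" by simp
      thus "is_unit c" by simp
    qed
    thus ?thesis by simp
  qed
  have simp_i: "simple_lf (cyc_form (q * int (n div m i)) (m i))" if "i < N" for i
  proof (cases "n = 1")
    case True
    hence "m i = 1" using mdvd[OF that] by simp
    thus ?thesis using True by (intro simple_cyc_bwd[where e=1 and k=0]) (auto simp: cong_def)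
  next
    case False
    hence n2: "n \<ge> 2" using n by simp
    hence oA: "1 \<in> ?A" and one: "1 mod int n = 1" by auto
    define T where "T = (\<Sum>j<N. e j * g j * g j * int (n div m j))"
    have f1: "f 1 ! j = g j" for j by (simp add: g_def one)
    have sumeq: "(\<Sum>j<N. of_int (e j * f 1!j * f 1!j) / of_nat (m j) :: rat) = of_int T / of_nat n"
    proof -
      have "(\<Sum>j<N. of_int (e j * f 1!j * f 1!j) / of_nat (m j) :: rat)
          = (\<Sum>j<N. of_int (e j * g j * g j * int (n div m j)) / of_nat n)"
      proof (intro sum.cong refl)
        fix j assume "j \<in> {..<N}"
        hence j: "j < N" by simp
        have "(of_int (e j * g j * g j) / of_nat (m j) :: rat)
            = of_int (e j * g j * g j * int (n div m j)) / of_nat n"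
          by (rule frac_scale) (use mpos[OF j] mdvd[OF j] n in auto)
        thus "(of_int (e j * f 1!j * f 1!j) / of_nat (m j) :: rat)
            = of_int (e j * g j * g j * int (n div m j)) / of_nat n" by (simp only: f1)
      qed
      also have "\<dots> = of_int T / of_nat n" unfolding T_def by (simp add: sum_divide_distrib)
      finally show ?thesis .
    qed
    have h: "(of_int (q*1*1) / of_nat n - (\<Sum>j<N. of_int (e j * f 1!j * f 1!j) / of_nat (m j)) :: rat) \<in> \<int>" using frm oA by blast
    hence "(of_int (q*1*1) / of_nat n - of_int T / of_nat n :: rat) \<in> \<int>" unfolding sumeq .
    hence cT: "[q = T] (mod int n)" using n frac_int_rev[of n "q*1*1" T] by simp
    have Mi: "m i \<ge> 1" using mpos[OF that] .
    have "[T = e i * g i * g i * int (n div m i)] (mod int (m i))"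
      unfolding T_def
    proof (rule sum_cong_single[OF that], intro allI impI)
      fix j assume j: "j < N" "j \<noteq> i"
      have "m i * m j dvd n" using mdvd that j pw[OF that j(1)] by (metis divides_mult j(2))
      then obtain t where t: "n = m j * (m i * t)" by (auto simp: dvd_def mult.commute mult.left_commute)
      have "n div m j = m i * t" using mpos[OF j(1)] by (simp add: t)
      hence "m i dvd n div m j" by simp
      hence "int (m i) dvd int (n div m j)" by simp
      thus "int (m i) dvd e j * g j * g j * int (n div m j)" by simp
    qed
    moreover have "[q = T] (mod int (m i))"
      using cT mdvd[OF that] by (meson cong_dvd_modulus of_nat_dvd_iff int_dvd_int_iff)
    ultimately have cq: "[q = e i * g i * g i * int (n div m i)] (mod int (m i))"
      using cong_trans by blast
    have cq2: "[q * int (n div m i) = e i * (g i * int (n div m i))^2] (mod int (m i))"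
      using cong_mult[OF cq cong_refl[of "int (n div m i)"]]
      by (simp add: power2_eq_square algebra_simps)
    have cqM: "coprime q (int (m i))"
      using q mdvd[OF that] by (meson coprime_divisors dvd_refl of_nat_dvd_iff int_dvd_int_iff)
    have "coprime (e i * g i * g i * int (n div m i)) (int (m i))"
      using cong_imp_coprime[OF cq cqM] .
    hence "coprime (int (n div m i)) (int (m i))" by simp
    hence "coprime (q * int (n div m i)) (int (m i))" using cqM by simp
    thus ?thesis using simple_cyc_bwd[OF Mi _ epm[OF that] cq2] by blast
  qed
  show ?thesis using prodn pw simp_i ms by (simp add: N_def)
qed



lemma mod_hom_aux:
  fixes x y c :: int
  assumes "m dvd n"
  shows "(((x+y) mod n) * c) mod m = ((x*c) mod m + (y*c) mod m) mod m"
proof -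
  have "(((x+y) mod n) * c) mod m = ((((x+y) mod n) mod m) * c) mod m" by (simp add: mod_mult_left_eq)
  also have "((x+y) mod n) mod m = (x+y) mod m" using assms by (simp add: mod_mod_cancel)
  also have "(((x+y) mod m) * c) mod m = ((x+y)*c) mod m" by (simp add: mod_mult_left_eq)
  also have "\<dots> = ((x*c) mod m + (y*c) mod m) mod m" by (simp add: distrib_right mod_add_eq)
  finally show ?thesis .
qed

lemma semi_bwd:
  assumes n: "n \<ge> 1" and q: "coprime q (int n)" and prod: "prod_list ns = n"
    and pw: "\<forall>i<length ns. \<forall>j<length ns. i \<noteq> j \<longrightarrow> coprime (ns!i) (ns!j)"
    and sim: "\<forall>i<length ns. simple_lf (cyc_form (q * int (n div ns!i)) (ns!i))"
  shows "semisimple_lf (cyc_form q n)"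
proof -
  define N where "N = length ns"
  have ndvd: "ns!i dvd n" if "i < N" for i using dvd_prodlist[of i ns] that prod by (simp add: N_def)
  have npos: "ns!i \<ge> 1" if "i < N" for i
  proof (rule ccontr)
    assume "\<not> ns!i \<ge> 1" hence "ns!i = 0" by simp
    thus False using ndvd[OF that] n by simp
  qed
  define D where "D i = n div ns!i" for i
  have ex: "\<forall>i. \<exists>e k. i < N \<longrightarrow> e \<in> {1,-1} \<and> [q * int (D i) = e*k^2] (mod int (ns!i))"
    using simple_cyc_fwd npos sim unfolding N_def D_def by metis
  obtain E K where EK: "\<forall>i. i < N \<longrightarrow> E i \<in> {1,-1} \<and> [q * int (D i) = E i * K i^2] (mod int (ns!i))"
    using ex by metis
  have copD: "coprime (int (D i)) (int (ns!i))" if "i < N" for i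
    using prodlist_div_coprime[OF pw, of i] that npos[OF that] prod by (simp add: D_def N_def)
  have copq: "coprime q (int (ns!i))" if "i < N" for i
    using q ndvd[OF that] by (meson coprime_divisors dvd_refl of_nat_dvd_iff int_dvd_int_iff)
  have copK: "coprime (K i) (int (ns!i))" if "i < N" for i
  proof -
    have "coprime (q * int (D i)) (int (ns!i))" using copD[OF that] copq[OF that] by simp
    hence "coprime (E i * K i^2) (int (ns!i))" using cong_imp_coprime EK that by blast
    thus ?thesis by simp
  qed
  have exU: "\<forall>i. \<exists>u. i < N \<longrightarrow> [int (D i) * u = 1] (mod int (ns!i))"
    using copD cong_solve_coprime_int by blast
  obtain U where U: "\<forall>i. i < N \<longrightarrow> [int (D i) * U i = 1] (mod int (ns!i))" using exU by metis
  define C where "C i = K i * U i" for i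
  have copC: "coprime (C i) (int (ns!i))" if "i < N" for i
  proof -
    have "coprime (U i) (int (ns!i))" using U that coprime_iff_invertible_int by (metis mult.commute)
    thus ?thesis using copK[OF that] by (simp add: C_def)
  qed
  define L where "L = map (\<lambda>i. (E i, ns!i)) [0..<N]"
  have lenL: "length L = N" by (simp add: L_def)
  have Lnth: "L!i = (E i, ns!i)" if "i < N" for i using that by (simp add: L_def)
  have mapL: "map snd L = ns" by (simp add: L_def N_def comp_def map_nth)
  have Lok: "\<forall>(e, m)\<in>set L. e \<in> {1, -1} \<and> m \<ge> 1" using EK npos by (auto simp: L_def)
  let ?A = "{0..<int n}"
  define f where "f x = map (\<lambda>i. (x * C i) mod int (ns!i)) [0..<N]" for x
  have fnth: "f x ! i = (x * C i) mod int (ns!i)" if "i < N" for x i using that by (simp add: f_def)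
  have inj: "inj_on f ?A"
  proof
    fix x y assume xy: "x \<in> ?A" "y \<in> ?A" "f x = f y"
    have "int (ns!i) dvd x - y" if i: "i < N" for i
    proof -
      have "[x * C i = y * C i] (mod int (ns!i))" using xy(3) fnth[OF i] by (metis cong_def)
      hence "[x = y] (mod int (ns!i))" using cong_mult_rcancel[OF copC[OF i]] by simp
      thus ?thesis by (simp add: cong_iff_dvd_diff)
    qed
    hence "int (prod_list ns) dvd x - y" using pw by (intro prodlist_dvd) (auto simp: N_def)
    hence "[x = y] (mod int n)" using prod by (simp add: cong_iff_dvd_diff)
    thus "x = y" using xy by (simp add: cong_def)
  qed
  have sub: "f ` ?A \<subseteq> car L"
  proof
    fix z assume "z \<in> f ` ?A"
    then obtain x where z: "z = f x" by auto
    show "z \<in> car L" unfolding car_def z lenL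
    proof (intro CollectI conjI allI impI)
      show "length (f x) = N" by (simp add: f_def)
    next
      fix i assume i: "i < N"
      have p: "int (ns!i) > 0" using npos[OF i] by simp
      show "0 \<le> f x ! i" using p by (simp add: fnth[OF i])
      show "f x ! i < int (snd (L!i))" using p by (simp add: fnth[OF i] Lnth[OF i])
    qed
  qed
  have cardL: "card (car L) = n" using card_car[of L] mapL prod by simp
  hence finL: "finite (car L)" using n by (intro card_ge_0_finite) simp
  have "card (f ` ?A) = card (car L)" using card_image[OF inj] cardL by simp
  hence "f ` ?A = car L" using sub finL by (intro card_subset_eq) auto
  hence bij: "bij_betw f ?A (car L)" using inj by (simp add: bij_betw_def)
  have hom: "\<forall>x\<in>?A. \<forall>y\<in>?A. f ((x+y) mod int n) = map (\<lambda>i. (f x!i + f y!i) mod int (snd (L!i))) [0..<length L]"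
  proof (intro ballI)
    fix x y
    show "f ((x+y) mod int n) = map (\<lambda>i. (f x!i + f y!i) mod int (snd (L!i))) [0..<length L]"
      unfolding lenL f_def
      by (intro map_cong refl) (simp add: Lnth mod_hom_aux ndvd)
  qed
  define T where "T = (\<Sum>i<N. E i * C i ^ 2 * int (D i))"
  have cT: "[q = T] (mod int n)"
  proof -
    have "int (ns!j) dvd T - q" if j: "j < N" for j
    proof -
      have "[T = E j * C j ^ 2 * int (D j)] (mod int (ns!j))"
        unfolding T_def
      proof (rule sum_cong_single[OF j], intro allI impI)
        fix i assume i: "i < N" "i \<noteq> j"
        have "ns!j * ns!i dvd n" using ndvd[OF i(1)] ndvd[OF j] pw i j unfolding N_def
          by (metis divides_mult)
        then obtain t where t: "n = ns!i * (ns!j * t)" by (auto simp: dvd_def mult.commute mult.left_commute)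
        have "D i = ns!j * t" using npos[OF i(1)] by (simp add: t D_def)
        hence "int (ns!j) dvd int (D i)" by simp
        thus "int (ns!j) dvd E i * C i ^ 2 * int (D i)" by simp
      qed
      moreover have "[E j * C j ^ 2 * int (D j) = q] (mod int (ns!j))"
      proof -
        have c1: "[E j * K j^2 = q * int (D j)] (mod int (ns!j))" using EK j by (simp add: cong_sym)
        have "E j * C j ^ 2 * int (D j) = (E j * K j^2) * (U j ^2 * int (D j))"
          by (simp add: C_def power2_eq_square algebra_simps)
        also have "[\<dots> = (q * int (D j)) * (U j ^2 * int (D j))] (mod int (ns!j))"
          by (intro cong_mult c1 cong_refl)
        also have "(q * int (D j)) * (U j ^2 * int (D j)) = q * (int (D j) * U j)^2"
          by (simp add: power2_eq_square algebra_simps)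
        also have "[\<dots> = q * 1^2] (mod int (ns!j))"
          using U j by (intro cong_mult cong_refl cong_pow) auto
        finally show ?thesis by simp
      qed
      ultimately have "[T = q] (mod int (ns!j))" using cong_trans by blast
      thus ?thesis by (simp add: cong_iff_dvd_diff)
    qed
    hence "int (prod_list ns) dvd T - q" using pw by (intro prodlist_dvd) (auto simp: N_def)
    thus ?thesis using prod by (simp add: cong_iff_dvd_diff dvd_diff_commute)
  qed
  have frm: "\<forall>x\<in>?A. \<forall>y\<in>?A. (of_int (q*x*y) / of_nat n
        - (\<Sum>i<length L. of_int (fst (L!i) * f x!i * f y!i) / of_nat (snd (L!i))) :: rat) \<in> \<int>"
  proof (intro ballI)
    fix x y
    define a where "a i = (of_int (E i * f x!i * f y!i) / of_nat (ns!i) :: rat)" for i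
    define b where "b i = (of_int (E i * C i ^ 2 * int (D i) * (x*y)) / of_nat n :: rat)" for i
    have ab: "a i - b i \<in> \<int>" if i: "i < N" for i
    proof -
      have bi: "b i = of_int (E i * C i ^ 2 * (x*y)) / of_nat (ns!i)"
        unfolding b_def D_def
        using frac_scale[of "ns!i" n "E i * C i ^ 2 * (x*y)"] npos[OF i] ndvd[OF i] n
        by (simp add: algebra_simps)
      have cg: "[E i * f x!i * f y!i = E i * C i ^ 2 * (x*y)] (mod int (ns!i))"
      proof -
        have "[E i * f x!i * f y!i = E i * (x * C i) * (y * C i)] (mod int (ns!i))"
          unfolding fnth[OF i] by (intro cong_mult cong_refl) (auto simp: cong_def)
        thus ?thesis by (simp add: power2_eq_square algebra_simps)
      qed
      have "(of_int (E i * f x!i * f y!i) / of_nat (ns!i) - of_int (E i * C i ^ 2 * (x*y)) / of_nat (ns!i) :: rat) \<in> \<int>"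
        by (rule frac_int) (use npos[OF i] cg in auto)
      thus ?thesis unfolding a_def bi .
    qed
    have sumb: "(\<Sum>i<N. b i) = of_int (T * (x*y)) / of_nat n"
      unfolding b_def T_def by (simp add: sum_divide_distrib sum_distrib_right)
    have "(of_int (q*x*y) / of_nat n - of_int (T * (x*y)) / of_nat n :: rat) \<in> \<int>"
      using n cT by (intro frac_int) (auto simp: cong_mult cong_refl mult.assoc)
    moreover have "(\<Sum>i<N. a i - b i) \<in> \<int>" using ab by (intro Ints_sum) auto
    ultimately have "(of_int (q*x*y) / of_nat n - of_int (T * (x*y)) / of_nat n) - (\<Sum>i<N. a i - b i) \<in> \<int>"
      by (rule Ints_diff)
    also have "(of_int (q*x*y) / of_nat n - of_int (T * (x*y)) / of_nat n) - (\<Sum>i<N. a i - b i)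
        = of_int (q*x*y) / of_nat n - (\<Sum>i<N. a i)"
      using sumb by (simp add: sum_subtractf)
    also have "(\<Sum>i<N. a i) = (\<Sum>i<length L. of_int (fst (L!i) * f x!i * f y!i) / of_nat (snd (L!i)))"
      unfolding lenL a_def by (intro sum.cong refl) (simp add: Lnth)
    finally show "(of_int (q*x*y) / of_nat n
        - (\<Sum>i<length L. of_int (fst (L!i) * f x!i * f y!i) / of_nat (snd (L!i))) :: rat) \<in> \<int>" .
  qed
  have "lf_iso (cyc_form q n) (osum L)"
    unfolding lf_iso_def cyc_form_def osum_def
    using bij hom frm by (auto simp: car_def)
  thus ?thesis using Lok unfolding semisimple_lf_def by blast
qed


theorem proposition1p7:
  fixes n :: nat and q :: int
  assumes "n \<ge> 1" and "coprime q (int n)"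
  shows "(simple_lf (cyc_form q n) \<longleftrightarrow>
            (\<exists>k::int. [q = k^2] (mod int n) \<or> [q = - (k^2)] (mod int n)))
       \<and> (semisimple_lf (cyc_form q n) \<longleftrightarrow>
            (\<exists>ns::nat list. prod_list ns = n
               \<and> (\<forall>i<length ns. \<forall>j<length ns. i \<noteq> j \<longrightarrow> coprime (ns!i) (ns!j))
               \<and> (\<forall>i<length ns. simple_lf (cyc_form (q * int (n div ns!i)) (ns!i)))))"
proof (intro conjI iffI)
  assume "simple_lf (cyc_form q n)"
  then obtain e k where "e \<in> {1,-1}" "[q = e*k^2] (mod int n)"
    using simple_cyc_fwd assms(1) by blast
  thus "\<exists>k::int. [q = k^2] (mod int n) \<or> [q = - (k^2)] (mod int n)" by auto
next
  assume "\<exists>k::int. [q = k^2] (mod int n) \<or> [q = - (k^2)] (mod int n)"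
  then obtain k where "[q = k^2] (mod int n) \<or> [q = - (k^2)] (mod int n)" by blast
  thus "simple_lf (cyc_form q n)"
  proof
    assume "[q = k^2] (mod int n)"
    thus ?thesis using simple_cyc_bwd[OF assms, of 1 k] by simp
  next
    assume "[q = - (k^2)] (mod int n)"
    thus ?thesis using simple_cyc_bwd[OF assms, of "-1" k] by simp
  qed
next
  assume "semisimple_lf (cyc_form q n)"
  then obtain L where L: "\<forall>(e,m)\<in>set L. e \<in> {1,-1} \<and> m \<ge> 1" "lf_iso (cyc_form q n) (osum L)"
    unfolding semisimple_lf_def by blast
  from semi_fwd[OF assms L] show "\<exists>ns::nat list. prod_list ns = n
               \<and> (\<forall>i<length ns. \<forall>j<length ns. i \<noteq> j \<longrightarrow> coprime (ns!i) (ns!j))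
               \<and> (\<forall>i<length ns. simple_lf (cyc_form (q * int (n div ns!i)) (ns!i)))"
    by (intro exI[of _ "map snd L"]) simp
next
  assume "\<exists>ns::nat list. prod_list ns = n
               \<and> (\<forall>i<length ns. \<forall>j<length ns. i \<noteq> j \<longrightarrow> coprime (ns!i) (ns!j))
               \<and> (\<forall>i<length ns. simple_lf (cyc_form (q * int (n div ns!i)) (ns!i)))"
  thus "semisimple_lf (cyc_form q n)" using semi_bwd[OF assms] by blast
qed

end
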